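(* In the setting described in the context, define $\varphi$ on metrics $d\in\mathcal{B}_2$ on $A$ by $\varphi(d)(x,y)=d(x,\cdot)+d(y,\cdot)-d(x,y)-d(\cdot,\cdot)+m$, and $\psi$ on $\Sigma_m$-proximities $\sigma$ on $A$ by $\psi(\sigma)(x,y)=\tfrac12(\sigma(x,x)+\sigma(y,y))-\sigma(x,y)$. Then $\psi(\varphi(d))=d$ for every metric $d$ on $A$ belonging to $\mathcal{B}_2$, and $\varphi(\psi(\sigma))=\sigma$ for every $\Sigma_m$-proximity $\sigma$ on $A$.
   Context: $A$ is a nonempty set (possibly infinite); $m\in\mathbb{R}$. A metric on $A$ is a function $d:A^2\to\mathbb{R}$ such that for all $x,y,z\in A$: $d(x,y)=0$ iff $x=y$, and $d(x,y)+d(x,z)-d(y,z)\ge0$. $\mathcal{B}_1$ is a set of functions $A\to\mathbb{R}$ forming a real linear space containing all constant functions, and $\mu:\mathcal{B}_1\to\mathbb{R}$ is a linear functional with $\mu(c)=c$ for every constant function $c$ and monotone: if $f,g\in\mathcal{B}_1$ and $f\ge g$ pointwise, then $\mu(f)\ge\mu(g)$. For $f:A^2\to\mathbb{R}$ such that $y\mapsto f(x,y)$ lies in $\mathcal{B}_1$ for every $x$, write $f(x,\cdot)=\mu(y\mapsto f(x,y))$. $\mathcal{B}_2$ is a set of functions $A^2\to\mathbb{R}$ forming a real linear space that contains all constant functions and all functions $(x,y)\mapsto h(x)$ and $(x,y)\mapsto h(y)$ with $h\in\mathcal{B}_1$, and such that for every $f\in\mathcal{B}_2$: $y\mapsto f(x,y)\in\mathcal{B}_1$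 for every $x$, $x\mapsto f(x,\cdot)\in\mathcal{B}_1$, and $x\mapsto f(x,x)\in\mathcal{B}_1$. For a symmetric $d\in\mathcal{B}_2$, $d(\cdot,\cdot)=\mu(x\mapsto d(x,\cdot))$. A function $\sigma\in\mathcal{B}_2$ is a $\Sigma_m$-proximity on $A$ if for all $x,y,z\in A$: (1) $\sigma(x,\cdot)=m$; (2) $\sigma(x,y)+\sigma(x,z)-\sigma(y,z)\le\sigma(x,x)$, with strict inequality whenever $z=y$ and $x\ne y$. *)

theory Defs
  imports Main "HOL.Real"
begin

text \<open>The set A is modelled by the (nonempty) type 'a. Functions A^2 -> R are curried.\<close>

definition is_metric :: "('a \<Rightarrow> 'a \<Rightarrow> real) \<Rightarrow> bool" where
  "is_metric d \<longleftrightarrow> (\<forall>x y. d x y = 0 \<longleftrightarrow> x = y) \<and> (\<forall>x y z. d x y + d x z - d y z \<ge> 0)"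

definition lin_space :: "('b \<Rightarrow> real) set \<Rightarrow> bool" where
  "lin_space B \<longleftrightarrow> (\<forall>f\<in>B. \<forall>g\<in>B. (\<lambda>x. f x + g x) \<in> B) \<and>
                    (\<forall>f\<in>B. \<forall>c::real. (\<lambda>x. c * f x) \<in> B) \<and>
                    (\<forall>c::real. (\<lambda>_. c) \<in> B)"

definition mean_setting :: "('a \<Rightarrow> real) set \<Rightarrow> (('a \<Rightarrow> real) \<Rightarrow> real) \<Rightarrow> bool" where
  "mean_setting B1 \<mu> \<longleftrightarrow> lin_space B1 \<and>
     (\<forall>f\<in>B1. \<forall>g\<in>B1. \<mu> (\<lambda>x. f x + g x) = \<mu> f + \<mu> g) \<and>
     (\<forall>f\<in>B1. \<forall>c. \<mu> (\<lambda>x. c * f x) = c * \<mu> f) \<and>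
     (\<forall>c. \<mu> (\<lambda>_. c) = c) \<and>
     (\<forall>f\<in>B1. \<forall>g\<in>B1. (\<forall>x. f x \<ge> g x) \<longrightarrow> \<mu> f \<ge> \<mu> g)"

definition lin_space2 :: "('a \<Rightarrow> 'a \<Rightarrow> real) set \<Rightarrow> bool" where
  "lin_space2 B \<longleftrightarrow> (\<forall>f\<in>B. \<forall>g\<in>B. (\<lambda>x y. f x y + g x y) \<in> B) \<and>
                     (\<forall>f\<in>B. \<forall>c::real. (\<lambda>x y. c * f x y) \<in> B) \<and>
                     (\<forall>c::real. (\<lambda>_ _. c) \<in> B)"

text \<open>Standing assumptions on B2 (f(x,.) is written mu (f x)).\<close>
definition B2_setting :: "('a \<Rightarrow> real) set \<Rightarrow> (('a \<Rightarrow> real) \<Rightarrow> real) \<Rightarrow> ('a \<Rightarrow> 'a \<Rightarrow> real) set \<Rightarrow> bool" where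
  "B2_setting B1 \<mu> B2 \<longleftrightarrow> lin_space2 B2 \<and>
     (\<forall>h\<in>B1. (\<lambda>x y. h x) \<in> B2 \<and> (\<lambda>x y. h y) \<in> B2) \<and>
     (\<forall>f\<in>B2. (\<forall>x. f x \<in> B1) \<and> (\<lambda>x. \<mu> (f x)) \<in> B1 \<and> (\<lambda>x. f x x) \<in> B1)"

definition phi :: "(('a \<Rightarrow> real) \<Rightarrow> real) \<Rightarrow> real \<Rightarrow> ('a \<Rightarrow> 'a \<Rightarrow> real) \<Rightarrow> ('a \<Rightarrow> 'a \<Rightarrow> real)" where
  "phi \<mu> m d = (\<lambda>x y. \<mu> (d x) + \<mu> (d y) - d x y - \<mu> (\<lambda>z. \<mu> (d z)) + m)"

definition psi :: "('a \<Rightarrow> 'a \<Rightarrow> real) \<Rightarrow> ('a \<Rightarrow> 'a \<Rightarrow> real)" where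
  "psi \<sigma> = (\<lambda>x y. (\<sigma> x x + \<sigma> y y) / 2 - \<sigma> x y)"

definition Sigma_prox :: "('a \<Rightarrow> 'a \<Rightarrow> real) set \<Rightarrow> (('a \<Rightarrow> real) \<Rightarrow> real) \<Rightarrow> real \<Rightarrow> ('a \<Rightarrow> 'a \<Rightarrow> real) \<Rightarrow> bool" where
  "Sigma_prox B2 \<mu> m \<sigma> \<longleftrightarrow> \<sigma> \<in> B2 \<and>
     (\<forall>x. \<mu> (\<sigma> x) = m) \<and>
     (\<forall>x y z. \<sigma> x y + \<sigma> x z - \<sigma> y z \<le> \<sigma> x x) \<and>
     (\<forall>x y. x \<noteq> y \<longrightarrow> \<sigma> x y + \<sigma> x y - \<sigma> y y < \<sigma> x x)"

end

theory Submission
  imports Defs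
begin

lemma mu_lin:
  assumes ms: "mean_setting B1 \<mu>" and f: "f \<in> B1" and g: "g \<in> B1"
  shows "\<mu> (\<lambda>y. a + b * f y + c * g y) = a + b * \<mu> f + c * \<mu> g"
proof -
  have ls: "lin_space B1" using ms by (simp add: mean_setting_def)
  have add: "\<And>f g. f \<in> B1 \<Longrightarrow> g \<in> B1 \<Longrightarrow> \<mu> (\<lambda>x. f x + g x) = \<mu> f + \<mu> g"
    using ms by (simp add: mean_setting_def)
  have sc: "\<And>f c. f \<in> B1 \<Longrightarrow> \<mu> (\<lambda>x. c * f x) = c * \<mu> f"
    using ms by (simp add: mean_setting_def)
  have cst: "\<And>c. \<mu> (\<lambda>_. c) = c" using ms by (simp add: mean_setting_def)
  have i1: "(\<lambda>x. b * f x) \<in> B1" "(\<lambda>x. c * g x) \<in> B1" "(\<lambda>_. a) \<in> B1"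
    using ls f g by (auto simp: lin_space_def)
  have addc: "\<And>f g. f \<in> B1 \<Longrightarrow> g \<in> B1 \<Longrightarrow> (\<lambda>x. f x + g x) \<in> B1"
    using ls unfolding lin_space_def by blast
  have i2: "(\<lambda>x. a + b * f x) \<in> B1"
    using addc[OF i1(3) i1(1)] .
  have "\<mu> (\<lambda>y. a + b * f y + c * g y) = \<mu> (\<lambda>x. a + b * f x) + \<mu> (\<lambda>x. c * g x)"
    using add[OF i2 i1(2)] by simp
  also have "\<mu> (\<lambda>x. a + b * f x) = \<mu> (\<lambda>_. a) + \<mu> (\<lambda>x. b * f x)"
    using add[OF i1(3) i1(1)] by simp
  finally show ?thesis using sc f g cst by simp
qed

theorem lemma1:
  fixes B1 :: "('a \<Rightarrow> real) set" and \<mu> :: "('a \<Rightarrow> real) \<Rightarrow> real"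
    and B2 :: "('a \<Rightarrow> 'a \<Rightarrow> real) set" and m :: real
  assumes "mean_setting B1 \<mu>" and "B2_setting B1 \<mu> B2"
  shows "(\<forall>d. d \<in> B2 \<and> is_metric d \<longrightarrow> psi (phi \<mu> m d) = d) \<and>
         (\<forall>\<sigma>. Sigma_prox B2 \<mu> m \<sigma> \<longrightarrow> phi \<mu> m (psi \<sigma>) = \<sigma>)"
proof safe
  fix d :: "'a \<Rightarrow> 'a \<Rightarrow> real"
  assume "d \<in> B2" "is_metric d"
  then have d0: "\<And>x. d x x = 0" by (simp add: is_metric_def)
  show "psi (phi \<mu> m d) = d"
  proof (rule ext, rule ext)
    fix x y
    define M where "M = \<mu> (\<lambda>z. \<mu> (d z))"
    have "psi (phi \<mu> m d) x y = ((\<mu> (d x) + \<mu> (d x) - d x x - M + m) + (\<mu> (d y) + \<mu> (d y) - d y y - M + m)) / 2 - (\<mu> (d x) + \<mu> (d y) - d x y - M + m)"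
      unfolding psi_def phi_def M_def by (rule refl)
    also have "\<dots> = d x y" using d0[of x] d0[of y] by (simp add: field_simps)
    finally show "psi (phi \<mu> m d) x y = d x y" .
  qed
next
  fix \<sigma> :: "'a \<Rightarrow> 'a \<Rightarrow> real"
  assume sp: "Sigma_prox B2 \<mu> m \<sigma>"
  have inB2: "\<sigma> \<in> B2" and mx: "\<And>x. \<mu> (\<sigma> x) = m" using sp by (auto simp: Sigma_prox_def)
  have row: "\<And>x. \<sigma> x \<in> B1" and diag: "(\<lambda>x. \<sigma> x x) \<in> B1"
    using assms(2) inB2 by (auto simp: B2_setting_def)
  define D where "D = \<mu> (\<lambda>y. \<sigma> y y)"
  have r: "\<mu> (psi \<sigma> x) = \<sigma> x x / 2 + D / 2 - m" for x
  proof -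
    have "psi \<sigma> x = (\<lambda>y. \<sigma> x x / 2 + (1/2) * \<sigma> y y + (-1) * \<sigma> x y)"
      by (auto simp: psi_def fun_eq_iff)
    then show ?thesis using mu_lin[OF assms(1) diag row[of x], of "\<sigma> x x / 2" "1/2" "-1"] mx D_def
      by simp
  qed
  have c: "\<mu> (\<lambda>z. \<mu> (psi \<sigma> z)) = D - m"
  proof -
    have "(\<lambda>z. \<mu> (psi \<sigma> z)) = (\<lambda>z. (D/2 - m) + (1/2) * \<sigma> z z + 0 * \<sigma> z z)"
      using r by (auto simp: fun_eq_iff)
    then show ?thesis using mu_lin[OF assms(1) diag diag, of "D/2 - m" "1/2" 0] D_def by simp
  qed
  show "phi \<mu> m (psi \<sigma>) = \<sigma>"
  proof (rule ext, rule ext)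
    fix x y
    have "phi \<mu> m (psi \<sigma>) x y = \<mu> (psi \<sigma> x) + \<mu> (psi \<sigma> y) - psi \<sigma> x y - \<mu> (\<lambda>z. \<mu> (psi \<sigma> z)) + m"
      unfolding phi_def by (rule refl)
    also have "\<dots> = (\<sigma> x x / 2 + D / 2 - m) + (\<sigma> y y / 2 + D / 2 - m) - ((\<sigma> x x + \<sigma> y y) / 2 - \<sigma> x y) - (D - m) + m"
      unfolding c unfolding r by (simp only: psi_def)
    also have "\<dots> = \<sigma> x y" by (simp add: field_simps)
    finally show "phi \<mu> m (psi \<sigma>) x y = \<sigma> x y" .
  qed
qed

end
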